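(* Let $f(z)=z+\sum_{n\ge 2}a_nz^n\in\mathcal{BT}_{\mathfrak{B}}$ and let $\Gamma_1,\Gamma_2$ be its logarithmic inverse coefficients. Then $$-\frac{1}{2\sqrt{29}}\le|\Gamma_2|-|\Gamma_1|\le\frac1{12}.$$ Both inequalities are sharp: the upper bound is attained by $f_2(z)=\int_0^z\sqrt{1+\tanh(t^2)}\,dt$, and the lower bound by the function $f$ with $f(0)=0$, $f'(z)=\sqrt{1+\tanh(\omega(z))}$, where $\omega=\frac{p-1}{p+1}$ and $p(z)=\dfrac{1+\frac{8}{\sqrt{29}}z+z^2}{1-z^2}$.
   Context: $\mathbb{D}=\{z\in\mathbb{C}:|z|<1\}$. $\mathcal{S}$ is the class of univalent analytic functions $f$ on $\mathbb{D}$ normalized by $f(0)=0$, $f'(0)=1$, i.e. $f(z)=z+\sum_{n\ge2}a_nz^n$. For analytic $g,h$ on $\mathbb{D}$, $g\prec h$ means there is an analytic $\omega:\mathbb{D}\to\mathbb{D}$ with $\omega(0)=0$ and $g=h\circ\omega$. Let $\mathfrak{B}(z)=\sqrt{1+\tanh z}$ (principal branch, $\mathfrak{B}(0)=1$). The class $\mathcal{BT}_{\mathfrak{B}}$ is $\{f\in\mathcal{S}: f'(z)\prec \mathfrak{B}(z)\}$. The logarithmic inverse coefficients $\Gamma_n$ are defined by $\log\frac{f^{-1}(w)}{w}=2\sum_{n\ge1}\Gamma_n w^n$ near $w=0$; explicitly $\Gamma_1=-\tfrac12a_2$, $\Gamma_2=-\tfrac12(a_3-\tfrac32a_2^2)$.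 *)

theory Defs
  imports "HOL-Complex_Analysis.Complex_Analysis"
begin

definition class_S :: "(complex \<Rightarrow> complex) set" where
  "class_S = {f. f holomorphic_on ball 0 1 \<and> inj_on f (ball 0 1) \<and> f 0 = 0 \<and> deriv f 0 = 1}"

definition subordinate :: "(complex \<Rightarrow> complex) \<Rightarrow> (complex \<Rightarrow> complex) \<Rightarrow> bool" where
  "subordinate g h \<longleftrightarrow> (\<exists>\<omega>. \<omega> holomorphic_on ball 0 1 \<and> \<omega> ` ball 0 1 \<subseteq> ball 0 1 \<and> \<omega> 0 = 0
       \<and> (\<forall>z\<in>ball 0 1. g z = h (\<omega> z)))"

definition Bfun :: "complex \<Rightarrow> complex" where
  "Bfun z = csqrt (1 + tanh z)"

definition class_BT :: "(complex \<Rightarrow> complex) set" where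
  "class_BT = {f \<in> class_S. subordinate (deriv f) Bfun}"

definition coef :: "(complex \<Rightarrow> complex) \<Rightarrow> nat \<Rightarrow> complex" where
  "coef f n = (deriv ^^ n) f 0 / of_nat (fact n)"

definition Gamma1 :: "(complex \<Rightarrow> complex) \<Rightarrow> complex" where
  "Gamma1 f = - coef f 2 / 2"

definition Gamma2 :: "(complex \<Rightarrow> complex) \<Rightarrow> complex" where
  "Gamma2 f = - (coef f 3 - 3/2 * (coef f 2)^2) / 2"

end

theory Submission
  imports Defs
begin

lemma one_plus_exp_slit:
  fixes w :: complex assumes "\<bar>Im w\<bar> < pi"
  shows "1 + exp w \<notin> \<real>\<^sub>\<le>\<^sub>0"
proof
  assume "1 + exp w \<in> \<real>\<^sub>\<le>\<^sub>0"
  then have im: "Im (exp w) = 0" and re: "1 + Re (exp w) \<le> 0"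
    by (auto simp: complex_nonpos_Reals_iff)
  from im have "sin (Im w) = 0" by (simp add: Im_exp)
  then have "Im w = 0" using sin_zero_pi_iff assms by blast
  then have "Re (exp w) > 0" by (simp add: Re_exp)
  with re show False by simp
qed

lemma cosh_eq_exp: "cosh (z::complex) = exp z * (1 + exp (-2*z)) / 2"
proof -
  have "exp z * exp (-2*z) = exp (-z)" by (simp flip: exp_add)
  then show ?thesis by (simp add: cosh_field_def algebra_simps)
qed

lemma ball_facts:
  fixes z :: complex assumes "norm z < 1"
  shows "cosh z \<noteq> 0" and "1 + tanh z \<notin> \<real>\<^sub>\<le>\<^sub>0"
proof -
  have "\<bar>Im (-2*z)\<bar> < pi"
    using abs_Im_le_cmod[of z] assms pi_gt3 by simp
  then have s: "1 + exp (-2*z) \<notin> \<real>\<^sub>\<le>\<^sub>0" by (rule one_plus_exp_slit)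
  then have nz: "1 + exp (-2*z) \<noteq> 0" by auto
  then show c: "cosh z \<noteq> 0" by (simp add: cosh_eq_exp)
  define q where "q = 1 + exp (-2*z)"
  have "1 + tanh z = (cosh z + sinh z) / cosh z" using c by (simp add: tanh_def field_simps)
  also have "\<dots> = exp z / cosh z" by (simp add: cosh_plus_sinh)
  also have "\<dots> = exp z / (exp z * q / 2)" by (simp add: cosh_eq_exp q_def)
  also have "\<dots> = 2 / q" using nz by (simp add: q_def)
  finally have eq: "1 + tanh z = 2 / q" .
  have qs: "q \<notin> \<real>\<^sub>\<le>\<^sub>0" using s q_def by simp
  show "1 + tanh z \<notin> \<real>\<^sub>\<le>\<^sub>0"
  proof
    assume "1 + tanh z \<in> \<real>\<^sub>\<le>\<^sub>0"
    then have "Im (2/q) = 0" "Re (2/q) \<le> 0" unfolding eq by (auto simp: complex_nonpos_Reals_iff)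
    moreover have "q \<noteq> 0" using nz q_def by simp
    ultimately have "Im q = 0" "Re q \<le> 0"
      by (auto simp: Im_divide Re_divide divide_le_0_iff complex_neq_0 power2_eq_square add_pos_pos)
    with qs show False by (auto simp: complex_nonpos_Reals_iff)
  qed
qed

lemma Bfun_deriv:
  fixes z :: complex assumes "norm z < 1"
  shows "(Bfun has_field_derivative (1 - tanh z ^ 2) / (2 * Bfun z)) (at z)"
proof -
  have "((\<lambda>z. csqrt (1 + tanh z)) has_field_derivative (0 + (1 - tanh z ^ 2)) / (2 * csqrt (1 + tanh z))) (at z)"
    using ball_facts[OF assms]
    by (auto intro!: derivative_eq_intros)
  then show ?thesis by (simp add: Bfun_def[abs_def])
qed

lemma Bfun0: "Bfun 0 = 1" by (simp add: Bfun_def)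

lemma Bfun_hol: "Bfun holomorphic_on ball 0 1"
  unfolding holomorphic_on_def
  using Bfun_deriv field_differentiable_at_within field_differentiable_def by fastforce

lemma deriv_Bfun_ball: "norm z < 1 \<Longrightarrow> deriv Bfun z = (1 - tanh z ^ 2) / (2 * Bfun z)"
  using Bfun_deriv DERIV_imp_deriv by blast

lemma dBfun0: "deriv Bfun 0 = 1/2"
  using deriv_Bfun_ball[of 0] by (simp add: Bfun0)

lemma ddBfun0: "deriv (deriv Bfun) 0 = -1/4"
proof -
  have ev: "eventually (\<lambda>z. deriv Bfun z = (1 - tanh z ^ 2) / (2 * Bfun z)) (nhds (0::complex))"
  proof -
    have "eventually (\<lambda>z. z \<in> ball (0::complex) 1) (nhds 0)"
      by (rule eventually_nhds_in_open) auto
    then show ?thesis by (rule eventually_mono) (auto intro: deriv_Bfun_ball)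
  qed
  have "((\<lambda>z. (1 - tanh z ^ 2) / (2 * Bfun z)) has_field_derivative -1/4) (at 0)"
    using Bfun_deriv[of 0]
    by (auto intro!: derivative_eq_intros simp: Bfun0)
  then show ?thesis using deriv_cong_ev[OF ev refl] DERIV_imp_deriv by simp
qed

lemma ev_ball: "z \<in> ball (0::complex) 1 \<Longrightarrow> eventually (\<lambda>w. w \<in> ball 0 1) (nhds z)"
  by (rule eventually_nhds_in_open) auto

lemma mult_z_derivs:
  assumes h: "h holomorphic_on ball 0 1" and eq: "\<And>z. z \<in> ball 0 1 \<Longrightarrow> w z = z * h z"
  shows "deriv w 0 = h 0" "deriv (deriv w) 0 = 2 * deriv h 0"
proof -
  have dw: "deriv w z = h z + z * deriv h z" if z: "z \<in> ball 0 1" for z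
  proof -
    have "deriv w z = deriv (\<lambda>z. z * h z) z"
      by (rule deriv_cong_ev[OF eventually_mono[OF ev_ball[OF z]] refl]) (simp add: eq)
    also have "\<dots> = h z + z * deriv h z"
      by (rule DERIV_imp_deriv)
         (auto intro!: derivative_eq_intros holomorphic_derivI[OF h _ z] simp: algebra_simps)
    finally show ?thesis .
  qed
  then show "deriv w 0 = h 0" by simp
  have dh: "deriv h holomorphic_on ball 0 1" by (rule holomorphic_deriv[OF h]) auto
  have "deriv (deriv w) 0 = deriv (\<lambda>z. h z + z * deriv h z) 0"
    by (rule deriv_cong_ev[OF eventually_mono[OF ev_ball] refl]) (auto simp: dw)
  also have "\<dots> = 2 * deriv h 0"
    by (rule DERIV_imp_deriv)
       (auto intro!: derivative_eq_intros holomorphic_derivI[OF h] holomorphic_derivI[OF dh])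
  finally show "deriv (deriv w) 0 = 2 * deriv h 0" .
qed

lemma coef_comp:
  assumes w: "w holomorphic_on ball 0 1" and w0: "w 0 = 0" and wb: "w ` ball 0 1 \<subseteq> ball 0 1"
    and eq: "\<And>z. z \<in> ball 0 1 \<Longrightarrow> deriv f z = Bfun (w z)"
  shows "coef f 2 = deriv w 0 / 4"
    "coef f 3 = deriv (deriv w) 0 / 12 - (deriv w 0)^2 / 24"
proof -
  have Bh: "Bfun holomorphic_on ball 0 1" by (rule Bfun_hol)
  have dB: "deriv Bfun holomorphic_on ball 0 1" by (rule holomorphic_deriv[OF Bh]) auto
  have dw: "deriv w holomorphic_on ball 0 1" by (rule holomorphic_deriv[OF w]) auto
  have d2: "deriv (deriv f) z = deriv Bfun (w z) * deriv w z" if z: "z \<in> ball 0 1" for z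
  proof -
    have wz: "w z \<in> ball 0 1" using wb z by blast
    have "deriv (deriv f) z = deriv (\<lambda>z. Bfun (w z)) z"
      by (rule deriv_cong_ev[OF eventually_mono[OF ev_ball[OF z]] refl]) (simp add: eq)
    also have "\<dots> = deriv Bfun (w z) * deriv w z"
      by (rule DERIV_imp_deriv)
         (auto intro!: derivative_eq_intros holomorphic_derivI[OF Bh, THEN DERIV_chain2] 
                 holomorphic_derivI[OF w _ z] wz)
    finally show ?thesis .
  qed
  have "(deriv ^^ 2) f 0 = deriv (deriv f) 0" by (simp add: numeral_2_eq_2)
  also have "\<dots> = deriv w 0 / 2" using d2[of 0] by (simp add: w0 dBfun0)
  finally show "coef f 2 = deriv w 0 / 4" by (simp add: coef_def mult.commute)
  have "(deriv ^^ 3) f 0 = deriv (deriv (deriv f)) 0" by (simp add: numeral_3_eq_3)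
  also have "\<dots> = deriv (\<lambda>z. deriv Bfun (w z) * deriv w z) 0"
    by (rule deriv_cong_ev[OF eventually_mono[OF ev_ball] refl]) (auto simp: d2)
  also have "\<dots> = deriv (deriv Bfun) (w 0) * deriv w 0 * deriv w 0 + deriv Bfun (w 0) * deriv (deriv w) 0"
  proof (rule DERIV_imp_deriv)
    have a: "(deriv Bfun has_field_derivative deriv (deriv Bfun) (w 0)) (at (w 0))"
      using holomorphic_derivI[OF dB, of "w 0"] w0 by simp
    have b: "(w has_field_derivative deriv w 0) (at 0)"
      using holomorphic_derivI[OF w, of 0] by simp
    have c: "(deriv w has_field_derivative deriv (deriv w) 0) (at 0)"
      using holomorphic_derivI[OF dw, of 0] by simp
    have "((\<lambda>z. deriv Bfun (w z)) has_field_derivative deriv (deriv Bfun) (w 0) * deriv w 0) (at 0)"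
      by (rule DERIV_chain2[OF a b])
    from DERIV_mult[OF this c]
    show "((\<lambda>z. deriv Bfun (w z) * deriv w z) has_field_derivative deriv (deriv Bfun) (w 0) * deriv w 0 * deriv w 0 + deriv Bfun (w 0) * deriv (deriv w) 0) (at 0)"
      by (simp add: algebra_simps)
  qed
  also have "\<dots> = deriv (deriv w) 0 / 2 - (deriv w 0)^2 / 4"
    by (simp add: w0 dBfun0 ddBfun0 power2_eq_square)
  finally show "coef f 3 = deriv (deriv w) 0 / 12 - (deriv w 0)^2 / 24"
    by (simp add: coef_def fact_numeral field_simps)
qed

lemma disc_aut_ineq:
  fixes g c :: complex assumes "norm g < 1" "norm c < 1"
  shows "norm (g - c) < norm (1 - cnj c * g)"
proof -
  obtain x y where g: "g = Complex x y" by (cases g)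
  obtain u v where c: "c = Complex u v" by (cases c)
  have g1: "x^2 + y^2 < 1" using assms(1) by (simp add: g cmod_def)
  have c1: "u^2 + v^2 < 1" using assms(2) by (simp add: c cmod_def)
  have e1: "1 - cnj c * g = Complex (1 - (u * x + v * y)) (v * x - u * y)" by (simp add: g c complex_eq_iff algebra_simps)
  have e2: "g - c = Complex (x-u) (y-v)" by (simp add: g c complex_eq_iff)
  have "(norm (1 - cnj c * g))^2 - (norm (g - c))^2 = (1 - (x^2+y^2)) * (1 - (u^2+v^2))"
    unfolding e1 e2 cmod_power2 by (simp add: power2_eq_square algebra_simps)
  also have "\<dots> > 0" using g1 c1 by simp
  finally have "(norm (g - c))^2 < (norm (1 - cnj c * g))^2" by simp
  then show ?thesis using power2_less_imp_less by fastforce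
qed

lemma schwarz_coef:
  assumes w: "w holomorphic_on ball 0 1" and w0: "w 0 = 0" and wb: "w ` ball 0 1 \<subseteq> ball 0 1"
  shows "norm (deriv (deriv w) 0) / 2 \<le> 1 - (norm (deriv w 0))^2"
proof -
  have no: "\<And>z. norm z < 1 \<Longrightarrow> norm (w z) < 1" using wb by (auto simp: image_subset_iff)
  obtain h where h: "h holomorphic_on ball 0 1" and wz: "\<And>z. norm z < 1 \<Longrightarrow> w z = z * h z"
     and dh0: "deriv w 0 = h 0"
    by (rule Schwarz3[OF w w0]) auto
  have md: "deriv w 0 = h 0" "deriv (deriv w) 0 = 2 * deriv h 0"
    using mult_z_derivs[OF h, of w] wz by auto
  define c where "c = h 0"
  have Sch1: "norm (w z) \<le> norm z" if "norm z < 1" for z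
    using Schwarz_Lemma(1)[OF w w0 no that] .
  have Sch2: "norm c \<le> 1" using Schwarz_Lemma(2)[OF w w0 no, of 0] dh0 c_def by simp
  show ?thesis
  proof (cases "norm c = 1")
    case True
    then obtain \<alpha> where al: "\<And>z. norm z < 1 \<Longrightarrow> w z = \<alpha> * z"
      using Schwarz_Lemma(3)[OF w w0 no, of 0] dh0 c_def by auto
    have "deriv w z = \<alpha>" if z: "z \<in> ball 0 1" for z
    proof -
      have "deriv w z = deriv (\<lambda>z. \<alpha> * z) z"
        by (rule deriv_cong_ev[OF eventually_mono[OF ev_ball[OF z]] refl]) (simp add: al)
      then show ?thesis by simp
    qed
    then have "deriv (deriv w) 0 = deriv (\<lambda>_. \<alpha>) 0"
      by (intro deriv_cong_ev[OF eventually_mono[OF ev_ball] refl]) auto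
    then have "deriv (deriv w) 0 = 0" by simp
    then show ?thesis using True dh0 c_def by simp
  next
    case False
    then have c1: "norm c < 1" using Sch2 by simp
    have hl: "norm (h z) < 1" if z: "norm z < 1" for z
    proof (cases "z = 0")
      case True then show ?thesis using c1 c_def by simp
    next
      case False
      have le: "norm (h z) \<le> 1"
        using Sch1[OF z] wz[OF z] False by (simp add: norm_mult)
      show ?thesis
      proof (rule ccontr)
        assume "\<not> norm (h z) < 1"
        then have "norm (w z) = norm z" using le wz[OF z] by (simp add: norm_mult)
        then obtain \<alpha> where al: "\<And>z. norm z < 1 \<Longrightarrow> w z = \<alpha> * z" and na: "norm \<alpha> = 1"
          using Schwarz_Lemma(3)[OF w w0 no, of 0] z False by auto
        have "deriv w 0 = deriv (\<lambda>z. \<alpha> * z) 0"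
          by (rule deriv_cong_ev[OF eventually_mono[OF ev_ball] refl]) (auto simp: al)
        then have "c = \<alpha>" using dh0 c_def by simp
        with na c1 show False by simp
      qed
    qed
    have den: "1 - cnj c * h z \<noteq> 0" if "norm z < 1" for z
    proof
      assume "1 - cnj c * h z = 0"
      then have "cnj c * h z = 1" by simp
      then have "norm (cnj c) * norm (h z) = 1" by (metis norm_mult norm_one)
      moreover have "norm (cnj c) * norm (h z) < 1 * 1"
        using c1 hl[OF that] by (intro mult_strict_mono) auto
      ultimately show False by simp
    qed
    define k where "k z = (h z - c) / (1 - cnj c * h z)" for z
    have kh: "k holomorphic_on ball 0 1"
      unfolding k_def using den by (auto intro!: holomorphic_intros h)
    have k0: "k 0 = 0" by (simp add: k_def c_def)
    have kno: "norm (k z) < 1" if "norm z < 1" for z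
      using disc_aut_ineq[OF hl[OF that] c1] den[OF that]
      by (simp add: k_def norm_divide divide_less_eq)
    have cc: "cnj c * c = of_real ((norm c)^2)" by (metis complex_norm_square mult.commute of_real_power)
    have dc: "1 - cnj c * c \<noteq> 0"
    proof -
      have "(norm c)^2 < 1" using c1 by (simp add: power_less_one_iff abs_square_less_1)
      then show ?thesis using cc by (metis eq_iff_diff_eq_0 less_irrefl of_real_1 of_real_eq_iff)
    qed
    have "(k has_field_derivative deriv h 0 / (1 - cnj c * c)) (at 0)"
    proof -
      have hd: "(h has_field_derivative deriv h 0) (at 0)" by (rule holomorphic_derivI[OF h]) auto
      have hc: "h 0 = c" by (simp add: c_def)
      show ?thesis unfolding k_def[abs_def]
        by (rule derivative_eq_intros hd refl)+ (use dc in \<open>simp_all add: hc power2_eq_square\<close>)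
    qed
    then have "deriv k 0 = deriv h 0 / (1 - cnj c * c)" by (rule DERIV_imp_deriv)
    moreover have "norm (deriv k 0) \<le> 1" using Schwarz_Lemma(2)[OF kh k0 kno, of 0] by simp
    ultimately have "norm (deriv h 0) \<le> norm (1 - cnj c * c)" using dc by (simp add: norm_divide divide_le_eq)
    also have "norm (1 - cnj c * c) = 1 - (norm c)^2"
    proof -
      have "(norm c)^2 \<le> 1" using c1 by (simp add: abs_square_le_1)
      then show ?thesis unfolding cc by (metis abs_of_nonneg diff_ge_0_iff_ge norm_of_real of_real_1 of_real_diff)
    qed
    finally show ?thesis using md dh0 c_def by (simp add: norm_mult)
  qed
qed

lemma Re_Bfun_pos: assumes "norm w < 1" shows "Re (Bfun w) > 0"
proof -
  have nz: "1 + tanh w \<notin> \<real>\<^sub>\<le>\<^sub>0" using ball_facts[OF assms] by simp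
  define s where "s = csqrt (1 + tanh w)"
  have "Re s \<ge> 0" unfolding s_def by (rule Re_csqrt)
  moreover have "Re s \<noteq> 0"
  proof
    assume r: "Re s = 0"
    have "s^2 = 1 + tanh w" unfolding s_def by (rule power2_csqrt)
    moreover have "s^2 = Complex (0 - (Im s)^2) 0"
      using r by (simp add: complex_eq_iff power2_eq_square)
    ultimately have "1 + tanh w = Complex (0 - (Im s)^2) 0" by simp
    then have "1 + tanh w \<in> \<real>\<^sub>\<le>\<^sub>0" by (simp add: complex_nonpos_Reals_iff)
    with nz show False by simp
  qed
  ultimately show ?thesis by (simp add: Bfun_def s_def)
qed

lemma inj_pos_re:
  assumes S: "convex S" and d: "\<And>z. z \<in> S \<Longrightarrow> (f has_field_derivative f' z) (at z)"
    and pos: "\<And>z. z \<in> S \<Longrightarrow> Re (f' z) > 0"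
  shows "inj_on f S"
proof (rule inj_onI, rule ccontr)
  fix a b assume a: "a \<in> S" and b: "b \<in> S" and e: "f a = f b" and ne: "a \<noteq> b"
  define g where "g z = f z * cnj (b - a)" for z
  have seg: "closed_segment a b \<subseteq> S" using S a b by (simp add: closed_segment_subset)
  have "\<exists>u. u \<in> closed_segment a b \<and> Re (g b) - Re (g a) = Re ((f' u * cnj (b - a)) * (b - a))"
  proof (rule complex_mvt_line)
    fix u assume "u \<in> closed_segment a b"
    then have "u \<in> S" using seg by blast
    then show "(g has_field_derivative f' u * cnj (b - a)) (at u)"
      unfolding g_def[abs_def] by (rule DERIV_cmult_right[OF d])
  qed
  then obtain u where u: "u \<in> closed_segment a b" and eq: "Re (g b) - Re (g a) = Re ((f' u * cnj (b - a)) * (b - a))"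
    by blast
  have "cnj (b - a) * (b - a) = of_real ((norm (b - a))^2)"
    by (metis complex_norm_square mult.commute of_real_power)
  then have "Re ((f' u * cnj (b - a)) * (b - a)) = Re (f' u) * (norm (b - a))^2"
    by (simp add: mult.assoc)
  also have "\<dots> > 0" using pos[of u] u seg ne by auto
  finally show False using eq e by (simp add: g_def)
qed

lemma exists_BT:
  assumes w: "w holomorphic_on ball 0 1" and w0: "w 0 = 0" and wb: "w ` ball 0 1 \<subseteq> ball 0 1"
  shows "\<exists>f\<in>class_BT. \<forall>z\<in>ball 0 1. deriv f z = Bfun (w z)"
proof -
  have hB: "(\<lambda>z. Bfun (w z)) holomorphic_on ball 0 1"
  proof -
    have "(Bfun \<circ> w) holomorphic_on ball 0 1" by (rule holomorphic_on_compose_gen[OF w Bfun_hol wb])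
    then show ?thesis by (simp add: o_def)
  qed
  obtain g where g: "\<And>x. x \<in> ball 0 1 \<Longrightarrow> (g has_field_derivative Bfun (w x)) (at x within ball 0 1)"
    using holomorphic_convex_primitive'[OF convex_ball open_ball hB] by blast
  define f where "f z = g z - g 0" for z
  have fd: "(f has_field_derivative Bfun (w x)) (at x)" if "x \<in> ball 0 1" for x
  proof -
    have "(g has_field_derivative Bfun (w x)) (at x)"
      using g[OF that] that at_within_open[of x "ball 0 1"] by simp
    then show ?thesis unfolding f_def[abs_def] by (auto intro!: derivative_eq_intros)
  qed
  have df: "deriv f z = Bfun (w z)" if "z \<in> ball 0 1" for z using fd[OF that] by (rule DERIV_imp_deriv)
  have hol: "f holomorphic_on ball 0 1"
    unfolding holomorphic_on_def
  proof
    fix x assume "x \<in> ball (0::complex) 1"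
    then have "f field_differentiable at x" using fd field_differentiable_def by blast
    then show "f field_differentiable at x within ball 0 1" by (rule field_differentiable_at_within)
  qed
  have inj: "inj_on f (ball 0 1)"
  proof (rule inj_pos_re[OF convex_ball fd])
    fix z :: complex assume "z \<in> ball 0 1"
    then have "w z \<in> ball 0 1" using wb by blast
    then show "Re (Bfun (w z)) > 0" by (intro Re_Bfun_pos) simp
  qed
  have "f \<in> class_S" unfolding class_S_def using hol inj df[of 0] by (simp add: f_def w0 Bfun0)
  moreover have "subordinate (deriv f) Bfun"
    unfolding subordinate_def using w w0 wb df by (intro exI[of _ w]) simp
  ultimately have "f \<in> class_BT" unfolding class_BT_def by simp
  then show ?thesis using df by (intro bexI[of _ f]) auto
qed

lemma final_bounds:
  fixes c d :: complex assumes cd: "norm d / 2 \<le> 1 - (norm c)^2"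
  shows "- 1 / (2 * sqrt 29) \<le> norm (- ((d/12 - c^2/24) - 3/2 * (c/4)^2) / 2) - norm (- (c/4) / 2)
       \<and> norm (- ((d/12 - c^2/24) - 3/2 * (c/4)^2) / 2) - norm (- (c/4) / 2) \<le> 1 / 12"
proof -
  define x where "x = norm c"
  define t where "t = norm d"
  define G where "G = norm (- ((d/12 - c^2/24) - 3/2 * (c/4)^2) / 2)"
  have G1: "norm (- (c/4) / 2) = x / 8" by (simp add: x_def norm_divide)
  have e: "- ((d/12 - c^2/24) - 3/2 * (c/4)^2) / 2 = 13/192 * c^2 - d/24"
    by (simp add: field_simps power2_eq_square)
  have nc2: "norm (13/192 * c^2) = 13/192 * x^2" by (simp add: x_def norm_mult norm_power)
  have nd: "norm (d/24) = t/24" by (simp add: t_def norm_divide)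
  have Gu: "G \<le> 13/192 * x^2 + t/24"
    unfolding G_def e using norm_triangle_ineq4[of "13/192 * c^2" "d/24"] nc2 nd by simp
  have Gl: "G \<ge> 13/192 * x^2 - t/24"
    unfolding G_def e using norm_triangle_ineq2[of "13/192 * c^2" "d/24"] nc2 nd by simp
  have G0: "G \<ge> 0" by (simp add: G_def)
  have x0: "x \<ge> 0" by (simp add: x_def)
  have ct: "t / 2 \<le> 1 - x^2" using cd by (simp add: x_def t_def)
  have x2: "x^2 \<ge> 0" by simp
  have up: "G - x/8 \<le> 1/12" using Gu ct x0 x2 by linarith
  define s where "s = sqrt 29"
  have s0: "s > 0" by (simp add: s_def)
  have ss: "s * s = 29" by (simp add: s_def)
  have s6: "s < 6" unfolding s_def by (rule real_sqrt_less_mono[of 29 36, simplified]) 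
  have low: "G - x/8 \<ge> - 1 / (2 * s)"
  proof (cases "x \<le> 4 / s")
    case True
    then have "x / 8 \<le> 1 / (2 * s)" by (simp add: field_simps)
    then show ?thesis using G0 by linarith
  next
    case False
    then have p1: "x - 4/s > 0" by simp
    have "29 * x > 29 * (4/s)" using False by simp
    moreover have "232 / s > 24" using s0 s6 by (simp add: field_simps)
    ultimately have p2: "29 * x + 116/s - 24 > 0" by simp
    have id: "(x - 4/s) * (29 * x + 116/s - 24) = 29 * x^2 - 24 * x - 16 + 96 / s"
    proof -
      have a: "464 / (s * s) = 16" using ss by simp
      have "(x - 4/s) * (29 * x + 116/s - 24) = 29 * x^2 - 24 * x - 464 / (s * s) + 96 / s"
        using s0 by (simp add: field_simps power2_eq_square)
      then show ?thesis using a by simp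
    qed
    have "0 < (x - 4/s) * (29 * x + 116/s - 24)" using p1 p2 by simp
    then have q: "0 < 29 * x^2 - 24 * x - 16 + 96 / s" using id by simp
    have "G - x/8 \<ge> (29 * x^2 - 16)/192 - x/8" proof -
      have "(29 * x^2 - 16)/192 = 13/192*x^2 - (1-x^2)/12" by (simp add: field_simps)
      moreover have "t/24 \<le> (1-x^2)/12" using ct by simp
      ultimately show ?thesis using Gl by (smt (verit))
    qed
    moreover have "(29 * x^2 - 16)/192 - x/8 + 1 / (2 * s) = (29 * x^2 - 24 * x - 16 + 96 / s) / 192"
      using s0 by (simp add: field_simps)
    moreover have "0 < (29 * x^2 - 24 * x - 16 + 96 / s) / 192" using q by simp
    ultimately show ?thesis by linarith
  qed
  have eqG: "norm (- ((d/12 - c^2/24) - 3/2 * (c/4)^2) / 2) - norm (- (c/4) / 2) = G - x/8"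
    by (simp only: G_def G1)
  have low': "- 1 / (2 * sqrt 29) \<le> G - x/8" using low by (simp only: s_def)
  show ?thesis unfolding eqG using up low' by simp
qed

lemma part1:
  assumes f: "f \<in> class_BT"
  shows "- 1 / (2 * sqrt 29) \<le> cmod (Gamma2 f) - cmod (Gamma1 f)
                      \<and> cmod (Gamma2 f) - cmod (Gamma1 f) \<le> 1 / 12"
proof -
  obtain w where w: "w holomorphic_on ball 0 1" and wb: "w ` ball 0 1 \<subseteq> ball 0 1" and w0: "w 0 = 0"
    and eq: "\<forall>z\<in>ball 0 1. deriv f z = Bfun (w z)"
    using f unfolding class_BT_def subordinate_def by blast
  have c2: "coef f 2 = deriv w 0 / 4" and c3: "coef f 3 = deriv (deriv w) 0 / 12 - (deriv w 0)^2 / 24"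
    using coef_comp[OF w w0 wb] eq by auto
  have sc: "norm (deriv (deriv w) 0) / 2 \<le> 1 - (norm (deriv w 0))^2"
    by (rule schwarz_coef[OF w w0 wb])
  show ?thesis
    using final_bounds[OF sc] unfolding Gamma1_def Gamma2_def c2 c3 by simp
qed

lemma part2: "\<exists>f\<in>class_BT. cmod (Gamma2 f) - cmod (Gamma1 f) = 1 / 12"
proof -
  define w :: "complex \<Rightarrow> complex" where "w z = z * z" for z
  have w: "w holomorphic_on ball 0 1" unfolding w_def[abs_def] by (intro holomorphic_intros)
  have w0: "w 0 = 0" by (simp add: w_def)
  have wb: "w ` ball 0 1 \<subseteq> ball 0 1"
  proof
    fix y assume "y \<in> w ` ball 0 1"
    then obtain z where z: "norm z < 1" and y: "y = z * z" by (auto simp: w_def)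
    have "norm z * norm z < 1 * 1" using z by (intro mult_strict_mono) auto
    then show "y \<in> ball 0 1" by (simp add: y norm_mult)
  qed
  obtain f where f: "f \<in> class_BT" and eq: "\<forall>z\<in>ball 0 1. deriv f z = Bfun (w z)"
    using exists_BT[OF w w0 wb] by blast
  have md: "deriv w 0 = 0" "deriv (deriv w) 0 = 2 * deriv (\<lambda>z. z) 0"
    using mult_z_derivs[of "\<lambda>z. z" w] by (auto simp: w_def)
  have c2: "coef f 2 = deriv w 0 / 4" and c3: "coef f 3 = deriv (deriv w) 0 / 12 - (deriv w 0)^2 / 24"
    using coef_comp[OF w w0 wb] eq by auto
  have "Gamma1 f = 0" "Gamma2 f = - 1 / 12"
    unfolding Gamma1_def Gamma2_def c2 c3 md by simp_all
  then show ?thesis using f by (intro bexI[of _ f]) simp_all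
qed

lemma part3: "\<exists>f\<in>class_BT. cmod (Gamma2 f) - cmod (Gamma1 f) = - 1 / (2 * sqrt 29)"
proof -
  define r :: real where "r = 4 / sqrt 29"
  define b :: complex where "b = of_real r"
  have r0: "r > 0" by (simp add: r_def)
  have r2: "r^2 = 16 / 29" by (simp add: r_def power_divide)
  have r1: "r < 1"
  proof -
    have "r^2 < 1^2" using r2 by simp
    then show ?thesis using r0 by (meson abs_square_less_1 less_le_not_le not_less_iff_gr_or_eq one_power2 power2_less_imp_less zero_le_one)
  qed
  have nb: "norm b = r" using r0 by (simp add: b_def)
  define h where "h z = (z + b) / (1 + b * z)" for z
  have den: "1 + b * z \<noteq> 0" if "norm z < 1" for z
  proof
    assume "1 + b * z = 0"
    then have "norm (b * z) = 1" by (metis add_eq_0_iff norm_minus_cancel norm_one)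
    moreover have "norm b * norm z < 1 * 1" using r1 r0 nb that by (intro mult_strict_mono) auto
    ultimately show False by (simp add: norm_mult)
  qed
  have hh: "h holomorphic_on ball 0 1" unfolding h_def[abs_def] using den by (auto intro!: holomorphic_intros)
  have hl: "norm (h z) < 1" if z: "norm z < 1" for z
  proof -
    have "norm (z - (- b)) < norm (1 - cnj (- b) * z)"
      by (rule disc_aut_ineq) (use z nb r1 in auto)
    moreover have "cnj b = b" by (simp add: b_def)
    ultimately have "norm (z + b) < norm (1 + b * z)" by simp
    then show ?thesis using den[OF z] by (simp add: h_def norm_divide divide_less_eq)
  qed
  define w where "w z = z * h z" for z
  have w: "w holomorphic_on ball 0 1" unfolding w_def[abs_def] using hh by (intro holomorphic_intros)
  have w0: "w 0 = 0" by (simp add: w_def)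
  have wb: "w ` ball 0 1 \<subseteq> ball 0 1"
  proof
    fix y assume "y \<in> w ` ball 0 1"
    then obtain z where z: "norm z < 1" and y: "y = z * h z" by (auto simp: w_def)
    have "norm z * norm (h z) < 1 * 1" using z hl[OF z] by (intro mult_strict_mono) auto
    then show "y \<in> ball 0 1" by (simp add: y norm_mult)
  qed
  obtain f where f: "f \<in> class_BT" and eq: "\<forall>z\<in>ball 0 1. deriv f z = Bfun (w z)"
    using exists_BT[OF w w0 wb] by blast
  have md: "deriv w 0 = h 0" "deriv (deriv w) 0 = 2 * deriv h 0"
    using mult_z_derivs[OF hh, of w] by (auto simp: w_def)
  have h0: "h 0 = b" by (simp add: h_def)
  have dh0: "deriv h 0 = 1 - b^2"
  proof (rule DERIV_imp_deriv)
    show "(h has_field_derivative 1 - b^2) (at 0)"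
      unfolding h_def[abs_def]
      by (rule derivative_eq_intros refl)+ (simp_all add: power2_eq_square)
  qed
  have c2: "coef f 2 = deriv w 0 / 4" and c3: "coef f 3 = deriv (deriv w) 0 / 12 - (deriv w 0)^2 / 24"
    using coef_comp[OF w w0 wb] eq by auto
  have b2: "b^2 = 16 / 29" by (simp add: b_def flip: of_real_power) (simp add: r2)
  have "Gamma2 f = 0"
    unfolding Gamma2_def c2 c3 md h0 dh0 by (simp add: power_divide b2)
  moreover have "norm (Gamma1 f) = r / 8"
    unfolding Gamma1_def c2 md h0 by (simp add: norm_divide nb)
  moreover have "r / 8 = 1 / (2 * sqrt 29)" by (simp add: r_def)
  ultimately show ?thesis using f by (intro bexI[of _ f]) simp_all
qed

theorem theorem7p2:
  shows "(\<forall>f\<in>class_BT. - 1 / (2 * sqrt 29) \<le> cmod (Gamma2 f) - cmod (Gamma1 f)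
                      \<and> cmod (Gamma2 f) - cmod (Gamma1 f) \<le> 1 / 12)
       \<and> (\<exists>f\<in>class_BT. cmod (Gamma2 f) - cmod (Gamma1 f) = 1 / 12)
       \<and> (\<exists>f\<in>class_BT. cmod (Gamma2 f) - cmod (Gamma1 f) = - 1 / (2 * sqrt 29))"
  using part1 part2 part3 by blast

end
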